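(* Let $V$ be the Volterra operator on $L^2[0,1]$. For every $f\in L^2[0,1]$, every complex $\lambda\neq0$ and every $u\in(0,1]$, \[\|(\lambda-V)^{-1}Vf\|\ge\frac{1}{\sqrt u}\Bigl(\Bigl|\int_0^u f(s)e^{\frac{u-s}{\lambda}}\,ds\Bigr|-\|f\|\Bigr).\]
   Context: $Vf(t)=\int_0^t f(s)\,ds$; norms are $L^2[0,1]$ norms. *)

theory Defs
  imports "HOL-Analysis.Analysis"
begin

definition L2_01 :: "(real \<Rightarrow> complex) \<Rightarrow> bool" where
  "L2_01 f \<longleftrightarrow> f \<in> borel_measurable (lebesgue_on {0..1}) \<and>
     integrable (lebesgue_on {0..1}) (\<lambda>x. (cmod (f x))^2)"

definition L2norm :: "(real \<Rightarrow> complex) \<Rightarrow> real" where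
  "L2norm f = sqrt (LINT x | lebesgue_on {0..1}. (cmod (f x))^2)"

definition volterra :: "(real \<Rightarrow> complex) \<Rightarrow> real \<Rightarrow> complex" where
  "volterra f t = (LINT s | lebesgue_on {0..t}. f s)"

text \<open>g represents (lam - V)^{-1} V f in L^2[0,1], i.e. g in L^2 and
  (lam - V) g = V f almost everywhere on [0,1].\<close>
definition is_resolvent_Vf :: "complex \<Rightarrow> (real \<Rightarrow> complex) \<Rightarrow> (real \<Rightarrow> complex) \<Rightarrow> bool" where
  "is_resolvent_Vf lam f g \<longleftrightarrow> L2_01 g \<and>
     (AE t in lebesgue_on {0..1}. lam * g t - volterra g t = volterra f t)"

end

theory Submission
  imports Defs
begin


lemma le_one_plus_sq: "(a::real) \<le> 1 + a^2"
proof -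
  have "0 \<le> (a - 1)^2" by simp
  then have "2*a \<le> 1 + a^2" by (simp add: power2_eq_square algebra_simps)
  moreover have "0 \<le> a^2" by simp
  ultimately show ?thesis by linarith
qed

lemma L2_integrable:
  assumes "L2_01 f"
  shows "integrable (lebesgue_on {0..1}) f"
proof -
  have m: "f \<in> borel_measurable (lebesgue_on {0..1})" and i: "integrable (lebesgue_on {0..1}) (\<lambda>x. (cmod (f x))^2)"
    using assms by (auto simp: L2_01_def)
  have fm: "finite_measure (lebesgue_on {0..1::real})"
    by (rule finite_measure_lebesgue_on) auto
  have "integrable (lebesgue_on {0..1}) (\<lambda>x. 1 + (cmod (f x))^2)"
    using i finite_measure.integrable_const[OF fm] by auto
  then show ?thesis
  proof (rule Bochner_Integration.integrable_bound)
    show "f \<in> borel_measurable (lebesgue_on {0..1})" by (rule m)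
    show "AE x in lebesgue_on {0..1}. norm (f x) \<le> norm (1 + (cmod (f x))\<^sup>2)"
    proof (rule AE_I2)
      fix x
      have "cmod (f x) \<le> 1 + (cmod (f x))^2"
        using le_one_plus_sq[of "cmod (f x)"] by simp
      then show "norm (f x) \<le> norm (1 + (cmod (f x))\<^sup>2)" by simp
    qed
  qed
qed

lemma L2_sqnorm:
  assumes "L2_01 f"
  shows "(L2norm f)^2 = (LINT x | lebesgue_on {0..1}. (cmod (f x))^2)"
  unfolding L2norm_def by (simp add: integral_nonneg_AE)

lemma L1_bound:
  assumes "L2_01 f" "0 < u" "u \<le> 1"
  shows "cmod (LINT x | lebesgue_on {0..u}. f x) \<le> sqrt u * L2norm f"
proof -
  have m: "f \<in> borel_measurable (lebesgue_on {0..1})" and i: "integrable (lebesgue_on {0..1}) (\<lambda>x. (cmod (f x))^2)"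
    using assms by (auto simp: L2_01_def)
  have fu: "integrable (lebesgue_on {0..u}) f"
    using integrable_subinterval[OF L2_integrable[OF assms(1)]] assms by auto
  have iu: "integrable (lebesgue_on {0..u}) (\<lambda>x. (cmod (f x))^2)"
    using integrable_subinterval[OF i] assms by auto
  define A where "A = (LINT x | lebesgue_on {0..u}. (cmod (f x))^2)"
  define L where "L = L2norm f"
  define I where "I = (LINT x | lebesgue_on {0..u}. cmod (f x))"
  have L0: "0 \<le> L" unfolding L_def L2norm_def by simp
  have AL: "A \<le> L^2"
    unfolding A_def L_def L2_sqnorm[OF assms(1)]
    by (rule integral_mono_lebesgue_on_AE) (use i assms in auto)
  have n1: "cmod (LINT x | lebesgue_on {0..u}. f x) \<le> I"
    unfolding I_def by (rule integral_norm_bound)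
  have key: "I \<le> (L^2 / c + c * u) / 2" if c: "c > 0" for c
  proof -
    have "I \<le> (LINT x | lebesgue_on {0..u}. ((cmod (f x))^2 / c + c) / 2)"
      unfolding I_def
    proof (rule integral_mono)
      show "integrable (lebesgue_on {0..u}) (\<lambda>x. cmod (f x))" using fu by simp
      show "integrable (lebesgue_on {0..u}) (\<lambda>x. ((cmod (f x))^2 / c + c) / 2)"
        using iu finite_measure.integrable_const[OF finite_measure_lebesgue_on[of "{0..u}"]] by auto
      fix x
      have "0 \<le> (cmod (f x) - c)^2" by simp
      then have "2 * c * cmod (f x) \<le> (cmod (f x))^2 + c^2"
        by (simp add: power2_eq_square algebra_simps)
      then show "cmod (f x) \<le> ((cmod (f x))^2 / c + c) / 2"
        using c by (simp add: field_simps power2_eq_square)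
    qed
    also have "\<dots> = (A / c + c * u) / 2"
      unfolding A_def using assms iu
      by (simp add: measure_restrict_space integral_divide_zero)
    also have "\<dots> \<le> (L^2 / c + c * u) / 2"
      using AL c by (simp add: divide_right_mono)
    finally show ?thesis .
  qed
  have "I \<le> sqrt u * L"
  proof (cases "L = 0")
    case True
    show ?thesis
    proof (rule ccontr)
      assume "\<not> I \<le> sqrt u * L"
      then have Ip: "I > 0" using True by simp
      have "I \<le> (L^2 / (I/u) + (I/u) * u) / 2" using key[of "I/u"] Ip assms by simp
      then have "I \<le> I / 2" using True assms by simp
      then show False using Ip by simp
    qed
  next
    case False
    then have Lp: "L > 0" using L0 by simp
    have su: "sqrt u > 0" using assms by simp
    have "I \<le> (L^2 / (L / sqrt u) + (L / sqrt u) * u) / 2" using key[of "L / sqrt u"] Lp su by simp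
    also have "\<dots> = sqrt u * L"
      using Lp su assms by (simp add: field_simps power2_eq_square)
    finally show ?thesis .
  qed
  then show ?thesis using n1 unfolding L_def by simp
qed

lemma ode_unique:
  fixes E :: "real \<Rightarrow> complex"
  assumes d: "\<And>t. t \<in> {0..1} \<Longrightarrow> (E has_vector_derivative k * E t) (at t within {0..1})"
    and e0: "E 0 = 0" and t: "t \<in> {0..1}"
  shows "E t = 0"
proof -
  define W where "W x = exp (x *\<^sub>R (-k)) * E x" for x
  have "(W has_vector_derivative 0) (at x within {0..1})" if x: "x \<in> {0..1}" for x
  proof -
    have "(W has_vector_derivative exp (x *\<^sub>R (-k)) * (k * E x) + exp (x *\<^sub>R (-k)) * (-k) * E x) (at x within {0..1})"
      unfolding W_def
      by (rule has_vector_derivative_mult[OF exp_scaleR_has_vector_derivative_right d[OF x]])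
    then show ?thesis by (simp add: algebra_simps)
  qed
  then have "\<exists>c. \<forall>x\<in>{0..1}. W x = c"
    using has_vector_derivative_zero_constant[of "{0..1::real}" W] by (metis convex_real_interval(5))
  then obtain c where c: "\<And>x. x \<in> {0..1} \<Longrightarrow> W x = c" by blast
  have "W 0 = 0" unfolding W_def using e0 by simp
  then have "W t = 0" using c[of 0] c[OF t] by simp
  then show ?thesis unfolding W_def by simp
qed



lemma lint_if_le:
  fixes g :: "real \<Rightarrow> complex"
  assumes "0 \<le> r" "r \<le> u"
  shows "(LINT s|lebesgue_on {0..u}. (if s \<le> r then g s else 0)) = (LINT s|lebesgue_on {0..r}. g s)"
proof -
  have "(LINT s|lebesgue_on {0..u}. (if s \<le> r then g s else 0)) = (LINT s|lebesgue. indicator {0..u} s *\<^sub>R (if s \<le> r then g s else 0))"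
    by (rule integral_restrict_space) auto
  also have "\<dots> = (LINT s|lebesgue. indicator {0..r} s *\<^sub>R g s)"
    by (rule Bochner_Integration.integral_cong) (use assms in \<open>auto simp: indicator_def\<close>)
  also have "\<dots> = (LINT s|lebesgue_on {0..r}. g s)"
    by (rule integral_restrict_space[symmetric]) auto
  finally show ?thesis .
qed

lemma lint_le_if:
  fixes g :: "real \<Rightarrow> complex"
  assumes "0 \<le> s" "s \<le> u"
  shows "(LINT r|lebesgue_on {0..u}. (if s \<le> r then g r else 0)) = (LINT r|lebesgue_on {s..u}. g r)"
proof -
  have "(LINT r|lebesgue_on {0..u}. (if s \<le> r then g r else 0)) = (LINT r|lebesgue. indicator {0..u} r *\<^sub>R (if s \<le> r then g r else 0))"
    by (rule integral_restrict_space) auto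
  also have "\<dots> = (LINT r|lebesgue. indicator {s..u} r *\<^sub>R g r)"
    by (rule Bochner_Integration.integral_cong) (use assms in \<open>auto simp: indicator_def\<close>)
  also have "\<dots> = (LINT r|lebesgue_on {s..u}. g r)"
    by (rule integral_restrict_space[symmetric]) auto
  finally show ?thesis .
qed

lemma exp_integral:
  fixes k :: complex
  assumes "k \<noteq> 0" "s \<le> u"
  shows "(LINT r|lebesgue_on {s..u}. exp ((u - r) *\<^sub>R k)) = (exp ((u - s) *\<^sub>R k) - 1) / k"
proof -
  have c: "continuous_on {s..u} (\<lambda>r. exp ((u - r) *\<^sub>R k))" by (intro continuous_intros)
  have eq: "exp ((u - r) *\<^sub>R k) = exp (u *\<^sub>R k) * exp (r *\<^sub>R (-k))" for r
    by (simp add: exp_add[symmetric] algebra_simps)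
  define P where "P r = - (exp (u *\<^sub>R k) / k) * exp (r *\<^sub>R (-k))" for r
  have d: "(P has_vector_derivative exp ((u - r) *\<^sub>R k)) (at r within {s..u})" for r
  proof -
    have "(P has_vector_derivative - (exp (u *\<^sub>R k) / k) * (exp (r *\<^sub>R (-k)) * (-k))) (at r within {s..u})"
      unfolding P_def by (intro has_vector_derivative_mult_right exp_scaleR_has_vector_derivative_right)
    then show ?thesis using assms by (simp add: eq)
  qed
  have "((\<lambda>r. exp ((u - r) *\<^sub>R k)) has_integral P u - P s) {s..u}"
    by (rule fundamental_theorem_of_calculus) (use assms d in auto)
  then have "integral {s..u} (\<lambda>r. exp ((u - r) *\<^sub>R k)) = P u - P s" by (rule integral_unique)
  also have "\<dots> = (exp ((u - s) *\<^sub>R k) - 1) / k"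
    unfolding P_def using assms by (simp add: eq field_simps exp_add[symmetric])
  finally show ?thesis
    using lebesgue_integral_eq_integral[OF continuous_imp_integrable_real[OF c]] by simp
qed

lemma K_meas:
  fixes f :: "real \<Rightarrow> complex"
  assumes fm: "f \<in> borel_measurable (lebesgue_on {0..u})"
  shows "(\<lambda>(s,r). if s \<le> r then f s * exp ((u - r) *\<^sub>R k) else 0) \<in> borel_measurable (lebesgue_on {0..u} \<Otimes>\<^sub>M lebesgue_on {0..u})"
proof -
  have idm: "(\<lambda>x. x) \<in> borel_measurable (lebesgue_on {0..u::real})"
    by (rule continuous_imp_measurable_on_sets_lebesgue) (auto intro: continuous_on_id)
  have 1: "(\<lambda>p. fst p) \<in> borel_measurable (lebesgue_on {0..u} \<Otimes>\<^sub>M lebesgue_on {0..u::real})"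
    using measurable_comp[OF measurable_fst idm] by (simp add: o_def)
  have 2: "(\<lambda>p. snd p) \<in> borel_measurable (lebesgue_on {0..u} \<Otimes>\<^sub>M lebesgue_on {0..u::real})"
    using measurable_comp[OF measurable_snd idm] by (simp add: o_def)
  have 3: "(\<lambda>p. f (fst p)) \<in> borel_measurable (lebesgue_on {0..u} \<Otimes>\<^sub>M lebesgue_on {0..u::real})"
    using measurable_comp[OF measurable_fst fm] by (simp add: o_def)
  have 4: "(\<lambda>p. exp ((u - snd p) *\<^sub>R k)) \<in> borel_measurable (lebesgue_on {0..u} \<Otimes>\<^sub>M lebesgue_on {0..u::real})"
  proof -
    have c: "continuous_on UNIV (\<lambda>x::real. exp ((u - x) *\<^sub>R k))" by (intro continuous_intros)
    have "(\<lambda>x::real. exp ((u - x) *\<^sub>R k)) \<in> borel_measurable borel"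
      using c by (rule borel_measurable_continuous_onI)
    from measurable_comp[OF 2 this] show ?thesis by (simp add: o_def)
  qed
  have "(\<lambda>p. if fst p \<le> snd p then f (fst p) * exp ((u - snd p) *\<^sub>R k) else 0) \<in> borel_measurable (lebesgue_on {0..u} \<Otimes>\<^sub>M lebesgue_on {0..u::real})"
    using 1 2 3 4 by measurable
  then show ?thesis by (simp add: case_prod_beta')
qed

lemma exp_bound:
  fixes k :: complex
  assumes "\<bar>x\<bar> \<le> u"
  shows "cmod (exp (x *\<^sub>R k)) \<le> exp (u * cmod k)"
proof -
  have "cmod (exp (x *\<^sub>R k)) = exp (x * Re k)" by (simp add: norm_exp_eq_Re)
  also have "x * Re k \<le> u * cmod k"
  proof -
    have "x * Re k \<le> \<bar>x\<bar> * \<bar>Re k\<bar>" by (metis abs_ge_self abs_mult)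
    also have "\<dots> \<le> u * cmod k"
      using assms abs_Re_le_cmod[of k] by (intro mult_mono) auto
    finally show ?thesis .
  qed
  then have "exp (x * Re k) \<le> exp (u * cmod k)" by simp
  finally show ?thesis .
qed

lemma fubini_identity:
  fixes f :: "real \<Rightarrow> complex" and k :: complex
  assumes fi: "integrable (lebesgue_on {0..u}) f" and u: "0 \<le> u" and k: "k \<noteq> 0"
  shows "(LINT s|lebesgue_on {0..u}. f s * exp ((u - s) *\<^sub>R k)) =
    (LINT s|lebesgue_on {0..u}. f s) + k * (LINT r|lebesgue_on {0..u}. exp ((u - r) *\<^sub>R k) * (LINT s|lebesgue_on {0..r}. f s))"
proof -
  define N where "N = lebesgue_on {0..u}"
  have fm: "f \<in> borel_measurable N" unfolding N_def using fi by auto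
  have fmN: "finite_measure N" unfolding N_def by (rule finite_measure_lebesgue_on) auto
  have pair: "pair_sigma_finite N N"
    using fmN by (auto simp: pair_sigma_finite_def finite_measure_def)
  define C where "C = exp (u * cmod k)"
  have Cp: "0 < C" unfolding C_def by simp
  define K where "K s r = (if s \<le> r then f s * exp ((u - r) *\<^sub>R k) else 0)" for s r
  have Kmeas: "(\<lambda>(s,r). K s r) \<in> borel_measurable (N \<Otimes>\<^sub>M N)"
    unfolding K_def N_def by (rule K_meas) (use fm N_def in simp)
  have spN: "space N = {0..u}" unfolding N_def by simp
  have Bint: "integrable (N \<Otimes>\<^sub>M N) (\<lambda>(s,r). C * cmod (f s))"
  proof (rule pair_sigma_finite.Fubini_integrable[OF pair])
    show "(\<lambda>(s, r). C * cmod (f s)) \<in> borel_measurable (N \<Otimes>\<^sub>M N)"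
    proof -
      have "(\<lambda>p. f (fst p)) \<in> borel_measurable (N \<Otimes>\<^sub>M N)"
        using measurable_comp[OF measurable_fst fm] by (simp add: o_def)
      then have "(\<lambda>p. C * cmod (f (fst p))) \<in> borel_measurable (N \<Otimes>\<^sub>M N)" by measurable
      then show ?thesis by (simp add: case_prod_beta')
    qed
    have "integrable N (\<lambda>x. measure N (space N) * (C * cmod (f x)))"
      using fi unfolding N_def by auto
    then show "integrable N (\<lambda>x. LINT y|N. norm (case (x, y) of (s, r) \<Rightarrow> C * cmod (f s)))"
      using Cp by (simp add: abs_mult)
    show "AE x in N. integrable N (\<lambda>y. case (x, y) of (s, r) \<Rightarrow> C * cmod (f s))"
      by (rule AE_I2) (simp add: finite_measure.integrable_const[OF fmN])
  qed
  have Kint: "integrable (N \<Otimes>\<^sub>M N) (\<lambda>(s,r). K s r)"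
  proof (rule Bochner_Integration.integrable_bound[OF Bint Kmeas])
    show "AE x in N \<Otimes>\<^sub>M N. norm (case x of (s, r) \<Rightarrow> K s r) \<le> norm (case x of (s, r) \<Rightarrow> C * cmod (f s))"
    proof (rule AE_I2)
      fix x assume "x \<in> space (N \<Otimes>\<^sub>M N)"
      then obtain s r where x: "x = (s, r)" "s \<in> {0..u}" "r \<in> {0..u}"
        by (auto simp: space_pair_measure spN)
      have "cmod (exp ((u - r) *\<^sub>R k)) \<le> C" unfolding C_def using x by (intro exp_bound) auto
      then have hc: "cmod (f s) * cmod (exp ((u - r) *\<^sub>R k)) \<le> cmod (f s) * C"
        by (rule mult_left_mono) simp
      have "cmod (K s r) \<le> C * cmod (f s)"
      proof (cases "s \<le> r")
        case True
        then have "cmod (K s r) = cmod (f s) * cmod (exp ((u - r) *\<^sub>R k))"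
          unfolding K_def by (simp only: if_True norm_mult)
        then show ?thesis using hc by (simp add: mult.commute)
      next
        case False
        then show ?thesis unfolding K_def using Cp by simp
      qed
      moreover have "0 \<le> C" unfolding C_def by simp
      ultimately show "norm (case x of (s, r) \<Rightarrow> K s r) \<le> norm (case x of (s, r) \<Rightarrow> C * cmod (f s))"
        using x by simp
    qed
  qed
  have Fub: "(LINT r|N. LINT s|N. K s r) = (LINT s|N. LINT r|N. K s r)"
    by (rule pair_sigma_finite.Fubini_integral[OF pair Kint])
  have lhs: "(LINT r|N. LINT s|N. K s r) = (LINT r|N. exp ((u - r) *\<^sub>R k) * (LINT s|lebesgue_on {0..r}. f s))"
  proof (rule Bochner_Integration.integral_cong[OF refl])
    fix r assume "r \<in> space N"
    then have r: "0 \<le> r" "r \<le> u" using spN by auto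
    have "(LINT s|N. K s r) = (LINT s|N. exp ((u - r) *\<^sub>R k) * (if s \<le> r then f s else 0))"
      unfolding K_def by (rule Bochner_Integration.integral_cong) auto
    also have "\<dots> = exp ((u - r) *\<^sub>R k) * (LINT s|N. (if s \<le> r then f s else 0))"
      by (rule integral_mult_right_zero)
    also have "\<dots> = exp ((u - r) *\<^sub>R k) * (LINT s|lebesgue_on {0..r}. f s)"
      unfolding N_def using lint_if_le[OF r] by simp
    finally show "(LINT s|N. K s r) = exp ((u - r) *\<^sub>R k) * (LINT s|lebesgue_on {0..r}. f s)" .
  qed
  have rhs: "(LINT s|N. LINT r|N. K s r) = (LINT s|N. (f s * exp ((u - s) *\<^sub>R k) - f s) / k)"
  proof (rule Bochner_Integration.integral_cong[OF refl])
    fix s assume "s \<in> space N"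
    then have s: "0 \<le> s" "s \<le> u" using spN by auto
    have "(LINT r|N. K s r) = (LINT r|N. f s * (if s \<le> r then exp ((u - r) *\<^sub>R k) else 0))"
      unfolding K_def by (rule Bochner_Integration.integral_cong) auto
    also have "\<dots> = f s * (LINT r|N. (if s \<le> r then exp ((u - r) *\<^sub>R k) else 0))"
      by (rule integral_mult_right_zero)
    also have "\<dots> = f s * ((exp ((u - s) *\<^sub>R k) - 1) / k)"
      unfolding N_def using lint_le_if[OF s] exp_integral[OF k s(2)] by simp
    finally show "(LINT r|N. K s r) = (f s * exp ((u - s) *\<^sub>R k) - f s) / k"
      by (simp add: field_simps)
  qed
  have hint: "integrable N (\<lambda>s. f s * exp ((u - s) *\<^sub>R k))"
  proof (rule Bochner_Integration.integrable_bound)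
    show "integrable N (\<lambda>s. C * cmod (f s))" using fi unfolding N_def by auto
    show "(\<lambda>s. f s * exp ((u - s) *\<^sub>R k)) \<in> borel_measurable N"
    proof -
      have c: "continuous_on UNIV (\<lambda>x::real. exp ((u - x) *\<^sub>R k))" by (intro continuous_intros)
      have "(\<lambda>x::real. exp ((u - x) *\<^sub>R k)) \<in> borel_measurable N"
        unfolding N_def by (rule continuous_imp_measurable_on_sets_lebesgue) (use c continuous_on_subset in auto)
      then show ?thesis using fm by measurable
    qed
    show "AE x in N. norm (f x * exp ((u - x) *\<^sub>R k)) \<le> norm (C * cmod (f x))"
    proof (rule AE_I2)
      fix s assume "s \<in> space N"
      then have s: "0 \<le> s" "s \<le> u" using spN by auto
      have "cmod (exp ((u - s) *\<^sub>R k)) \<le> C" unfolding C_def using s by (intro exp_bound) auto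
      then have hc: "cmod (f s) * cmod (exp ((u - s) *\<^sub>R k)) \<le> cmod (f s) * C"
        by (rule mult_left_mono) simp
      then show "norm (f s * exp ((u - s) *\<^sub>R k)) \<le> norm (C * cmod (f s))"
        using Cp by (simp only: norm_mult norm_of_real) (simp add: mult.commute)
    qed
  qed
  have "(LINT s|N. (f s * exp ((u - s) *\<^sub>R k) - f s) / k) =
      ((LINT s|N. f s * exp ((u - s) *\<^sub>R k)) - (LINT s|N. f s)) / k"
    using hint fi unfolding N_def by (simp add: integral_divide_zero integral_diff)
  then have "(LINT r|N. exp ((u - r) *\<^sub>R k) * (LINT s|lebesgue_on {0..r}. f s)) =
      ((LINT s|N. f s * exp ((u - s) *\<^sub>R k)) - (LINT s|N. f s)) / k"
    using Fub lhs rhs by simp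
  then show ?thesis unfolding N_def using k by (simp add: field_simps)
qed


lemma AE_sub:
  assumes "AE x in lebesgue_on {0..1}. P x" "t \<le> 1"
  shows "AE x in lebesgue_on {0..t::real}. P x"
proof -
  have "AE x in lebesgue. x \<in> {0..1} \<longrightarrow> P x"
    using assms(1) by (subst (asm) AE_restrict_space_iff) auto
  then have "AE x in lebesgue. x \<in> {0..t} \<longrightarrow> P x"
    by eventually_elim (use assms(2) in auto)
  then show ?thesis by (subst AE_restrict_space_iff) auto
qed

theorem lemma4p9:
  fixes f :: "real \<Rightarrow> complex" and lam :: complex and u :: real
  assumes "L2_01 f" and "lam \<noteq> 0" and "0 < u" and "u \<le> 1"
  shows "(\<exists>g. is_resolvent_Vf lam f g) \<and>
    (\<forall>g. is_resolvent_Vf lam f g \<longrightarrow>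
       L2norm g \<ge> (1 / sqrt u) *
         (cmod (LINT s | lebesgue_on {0..u}. f s * exp ((of_real u - of_real s) / lam)) - L2norm f))"
proof -
  define k where "k = 1 / lam"
  have k0: "k \<noteq> 0" and lk: "lam * k = 1" using assms(2) unfolding k_def by auto
  have fi1: "integrable (lebesgue_on {0..1}) f" by (rule L2_integrable[OF assms(1)])
  define F where "F t = volterra f t" for t
  have Fc: "continuous_on {0..1} F"
    unfolding F_def volterra_def by (rule indefinite_integral_continuous_real[OF fi1])
  define P where "P t = integral {0..t} (\<lambda>r. exp (r *\<^sub>R (-k)) * F r)" for t
  have Pic: "continuous_on {0..1} (\<lambda>r. exp (r *\<^sub>R (-k)) * F r)"
    by (intro continuous_intros Fc)
  have Pd: "(P has_vector_derivative exp (t *\<^sub>R (-k)) * F t) (at t within {0..1})" if "t \<in> {0..1}" for t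
    unfolding P_def by (rule integral_has_vector_derivative[OF Pic that])
  define G where "G t = k * (exp (t *\<^sub>R k) * P t)" for t
  have ee: "exp (t *\<^sub>R k) * exp (t *\<^sub>R (-k)) = 1" for t
    by (simp add: exp_add[symmetric])
  have Gd: "(G has_vector_derivative k * (G t + F t)) (at t within {0..1})" if t: "t \<in> {0..1}" for t
  proof -
    have "(G has_vector_derivative k * (exp (t *\<^sub>R k) * (exp (t *\<^sub>R (-k)) * F t) + exp (t *\<^sub>R k) * k * P t)) (at t within {0..1})"
      unfolding G_def
      by (intro has_vector_derivative_mult_right has_vector_derivative_mult exp_scaleR_has_vector_derivative_right Pd t)
    moreover have "k * (exp (t *\<^sub>R k) * (exp (t *\<^sub>R (-k)) * F t) + exp (t *\<^sub>R k) * k * P t) = k * (G t + F t)"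
      unfolding G_def using ee[of t] by (simp add: algebra_simps)
    ultimately show ?thesis by (simp only:)
  qed
  have Gc: "continuous_on {0..1} G" by (rule continuous_on_vector_derivative[OF Gd])
  have G0: "G 0 = 0" unfolding G_def P_def by simp
  define g where "g t = k * (G t + F t)" for t
  have gc: "continuous_on {0..1} g" unfolding g_def by (intro continuous_intros Gc Fc)
  have VG: "volterra g t = G t" if t: "t \<in> {0..1}" for t
  proof -
    have gct: "continuous_on {0..t} g" by (rule continuous_on_subset[OF gc]) (use t in auto)
    have "volterra g t = integral {0..t} g"
      unfolding volterra_def by (rule lebesgue_integral_eq_integral[OF continuous_imp_integrable_real[OF gct]]) auto
    also have "\<dots> = G t - G 0"
    proof (rule integral_unique, rule fundamental_theorem_of_calculus)
      show "0 \<le> t" using t by auto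
      fix x assume "x \<in> {0..t}"
      then have "x \<in> {0..1}" using t by auto
      from has_vector_derivative_within_subset[OF Gd[OF this]]
      show "(G has_vector_derivative g x) (at x within {0..t})" unfolding g_def using t by auto
    qed
    finally show ?thesis using G0 by simp
  qed
  have ex: "is_resolvent_Vf lam f g"
    unfolding is_resolvent_Vf_def L2_01_def
  proof (intro conjI)
    show "g \<in> borel_measurable (lebesgue_on {0..1})"
      by (rule continuous_imp_measurable_on_sets_lebesgue[OF gc]) auto
    have "continuous_on {0..1} (\<lambda>x. (cmod (g x))^2)" by (intro continuous_intros gc)
    then show "integrable (lebesgue_on {0..1}) (\<lambda>x. (cmod (g x))^2)"
      by (rule continuous_imp_integrable_real)
    show "AE t in lebesgue_on {0..1}. lam * g t - volterra g t = volterra f t"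
    proof (rule AE_I2)
      fix t :: real assume "t \<in> space (lebesgue_on {0..1})"
      then have t: "t \<in> {0..1}" by simp
      have "lam * g t = G t + F t" unfolding g_def using lk by (simp add: mult.assoc[symmetric])
      then show "lam * g t - volterra g t = volterra f t" using VG[OF t] unfolding F_def by simp
    qed
  qed
  have fiu: "integrable (lebesgue_on {0..u}) f" using integrable_subinterval[OF fi1] assms by auto
  have Fcu: "continuous_on {0..u} (\<lambda>r. exp ((u - r) *\<^sub>R k) * F r)"
    by (intro continuous_intros continuous_on_subset[OF Fc]) (use assms in auto)
  have hid: "(LINT s | lebesgue_on {0..u}. f s * exp ((of_real u - of_real s) / lam)) = F u + G u"
  proof -
    have e1: "(of_real u - of_real s) / lam = (u - s) *\<^sub>R k" for s
      unfolding k_def by (simp add: scaleR_conv_of_real)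
    have "(LINT s | lebesgue_on {0..u}. f s * exp ((of_real u - of_real s) / lam)) =
       (LINT s|lebesgue_on {0..u}. f s) + k * (LINT r|lebesgue_on {0..u}. exp ((u - r) *\<^sub>R k) * (LINT s|lebesgue_on {0..r}. f s))"
      unfolding e1 by (rule fubini_identity[OF fiu _ k0]) (use assms in auto)
    also have "(LINT r|lebesgue_on {0..u}. exp ((u - r) *\<^sub>R k) * (LINT s|lebesgue_on {0..r}. f s)) = exp (u *\<^sub>R k) * P u"
    proof -
      have Picu: "continuous_on {0..u} (\<lambda>r. exp (r *\<^sub>R (-k)) * F r)"
        by (rule continuous_on_subset[OF Pic]) (use assms in auto)
      have "(LINT r|lebesgue_on {0..u}. exp ((u - r) *\<^sub>R k) * (LINT s|lebesgue_on {0..r}. f s)) =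
          (LINT r|lebesgue_on {0..u}. exp (u *\<^sub>R k) * (exp (r *\<^sub>R (-k)) * F r))"
        unfolding F_def volterra_def
        by (rule Bochner_Integration.integral_cong[OF refl]) (simp add: exp_add[symmetric] algebra_simps)
      also have "\<dots> = exp (u *\<^sub>R k) * (LINT r|lebesgue_on {0..u}. exp (r *\<^sub>R (-k)) * F r)"
        by simp
      also have "(LINT r|lebesgue_on {0..u}. exp (r *\<^sub>R (-k)) * F r) = P u"
        unfolding P_def
        by (rule lebesgue_integral_eq_integral[OF continuous_imp_integrable_real[OF Picu]]) auto
      finally show ?thesis .
    qed
    finally show ?thesis by (simp only: G_def F_def volterra_def)
  qed
  have main: "L2norm g' \<ge> (1 / sqrt u) *
         (cmod (LINT s | lebesgue_on {0..u}. f s * exp ((of_real u - of_real s) / lam)) - L2norm f)"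
    if hg: "is_resolvent_Vf lam f g'" for g'
  proof -
    have L2g: "L2_01 g'" and ae: "AE t in lebesgue_on {0..1}. lam * g' t - volterra g' t = volterra f t"
      using hg unfolding is_resolvent_Vf_def by auto
    have gi1: "integrable (lebesgue_on {0..1}) g'" by (rule L2_integrable[OF L2g])
    define G2 where "G2 t = volterra g' t" for t
    have G2c: "continuous_on {0..1} G2"
      unfolding G2_def volterra_def by (rule indefinite_integral_continuous_real[OF gi1])
    have ae2: "AE t in lebesgue_on {0..1}. g' t = k * (G2 t + F t)"
      using ae
    proof eventually_elim
      case (elim t)
      then have "lam * g' t = G2 t + F t" unfolding G2_def F_def by (simp add: algebra_simps)
      then have "k * (lam * g' t) = k * (G2 t + F t)" by simp
      moreover have "k * (lam * g' t) = (lam * k) * g' t" by (simp add: algebra_simps)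
      ultimately show ?case using lk by simp
    qed
    define q where "q r = k * (G2 r + F r)" for r
    have qc: "continuous_on {0..1} q" unfolding q_def by (intro continuous_intros G2c Fc)
    have G2eq: "G2 t = integral {0..t} q" if t: "t \<in> {0..1}" for t
    proof -
      have qct: "continuous_on {0..t} q" by (rule continuous_on_subset[OF qc]) (use t in auto)
      have "G2 t = (LINT r|lebesgue_on {0..t}. g' r)" unfolding G2_def volterra_def ..
      also have "\<dots> = (LINT r|lebesgue_on {0..t}. q r)"
      proof (rule integral_cong_AE)
        show "g' \<in> borel_measurable (lebesgue_on {0..t})"
          using integrable_subinterval[OF gi1, of 0 t] t by auto
        show "q \<in> borel_measurable (lebesgue_on {0..t})"
          by (rule continuous_imp_measurable_on_sets_lebesgue[OF qct]) auto
        show "AE x in lebesgue_on {0..t}. g' x = q x"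
          using AE_sub[OF ae2, of t] t unfolding q_def by auto
      qed
      also have "\<dots> = integral {0..t} q"
        by (rule lebesgue_integral_eq_integral[OF continuous_imp_integrable_real[OF qct]]) auto
      finally show ?thesis .
    qed
    have G2d: "(G2 has_vector_derivative q t) (at t within {0..1})" if t: "t \<in> {0..1}" for t
      by (rule has_vector_derivative_transform[OF t G2eq integral_has_vector_derivative[OF qc t]])
    define E where "E t = G2 t - G t" for t
    have Ed: "(E has_vector_derivative k * E t) (at t within {0..1})" if t: "t \<in> {0..1}" for t
    proof -
      have "(E has_vector_derivative q t - k * (G t + F t)) (at t within {0..1})"
        unfolding E_def by (intro has_vector_derivative_diff G2d Gd t)
      then show ?thesis unfolding q_def E_def by (simp add: algebra_simps)
    qed
    have E0: "E 0 = 0" unfolding E_def using G2eq[of 0] G0 by simp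
    have "E u = 0" by (rule ode_unique[OF Ed E0]) (use assms in auto)
    then have G2u: "G2 u = G u" unfolding E_def by simp
    have b1: "cmod (F u) \<le> sqrt u * L2norm f"
      unfolding F_def volterra_def by (rule L1_bound[OF assms(1,3,4)])
    have b2: "cmod (G2 u) \<le> sqrt u * L2norm g'"
      unfolding G2_def volterra_def by (rule L1_bound[OF L2g assms(3,4)])
    define ch where "ch = cmod (LINT s | lebesgue_on {0..u}. f s * exp ((of_real u - of_real s) / lam))"
    have chb: "ch \<le> sqrt u * L2norm f + sqrt u * L2norm g'"
      unfolding ch_def hid using b1 b2 G2u norm_triangle_ineq[of "F u" "G u"] by simp
    have nf: "0 \<le> L2norm f" unfolding L2norm_def by simp
    have su: "0 < sqrt u" "sqrt u \<le> 1" using assms by auto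
    have "sqrt u * L2norm f \<le> L2norm f" using su nf by (simp add: mult_left_le_one_le)
    then have "ch - L2norm f \<le> sqrt u * L2norm g'" using chb by simp
    then have "(ch - L2norm f) / sqrt u \<le> L2norm g'" using su by (simp add: pos_divide_le_eq mult.commute)
    then show ?thesis unfolding ch_def by simp
  qed
  show ?thesis using ex main by blast
qed

end
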